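(* Let $\mu,\nu\in\mathbb{R}$, let $U_\sigma=U_\sigma(so_{\mu,\nu}(2,2))$ with coproduct $\Delta$ be as in the context, and define $$\mathcal P=\frac{e^{\sigma P}-1}{\sigma},\quad \mathcal H=H,\quad \mathcal K=K,\quad \mathcal D=D,\quad \mathcal C_1=C_1,\quad \mathcal C_2=C_2+\sigma\mu D^2.$$ Then these elements satisfy the undeformed relations $[\mathcal K,\mathcal H]=\nu\mathcal P$, $[\mathcal K,\mathcal P]=\mu\mathcal H$, $[\mathcal H,\mathcal P]=0$, $[\mathcal D,\mathcal H]=\mathcal H$, $[\mathcal D,\mathcal C_1]=-\mathcal C_1$, $[\mathcal H,\mathcal C_1]=-2\nu\mathcal D$, $[\mathcal D,\mathcal P]=\mathcal P$, $[\mathcal D,\mathcal C_2]=-\mathcal C_2$, $[\mathcal P,\mathcal C_2]=2\mu\mathcal D$, $[\mathcal K,\mathcal C_1]=\nu\mathcal C_2$, $[\mathcal K,\mathcal C_2]=\mu\mathcal C_1$, $[\mathcal K,\mathcal D]=0$, $[\mathcal H,\mathcal C_2]=2\mathcal K$, $[\mathcal P,\mathcal C_1]=-2\mathcal K$, $[\mathcal C_1,\mathcal C_2]=0$, and their coproducts are $$\Delta(\mathcal P)=1\otimes\mathcal P+\mathcal P\otimes 1+\sigma\mathcal P\otimes\mathcal P,\qquad \Delta(\mathcal H)=1\otimes\mathcal H+\mathcal H\otimes 1+\sigma\mathcal H\otimes\mathcal P,$$ $$\Delta(\mathcal D)=1\otimes\mathcal D+\mathcal D\otimes\frac{1}{1+\sigma\mathcal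 P},\qquad \Delta(\mathcal K)=1\otimes\mathcal K+\mathcal K\otimes 1-\sigma\mu\,\mathcal D\otimes\frac{\mathcal H}{1+\sigma\mathcal P},$$ $$\Delta(\mathcal C_1)=1\otimes\mathcal C_1+\mathcal C_1\otimes\frac{1}{1+\sigma\mathcal P}-2\sigma\,\mathcal D\otimes\frac{1}{1+\sigma\mathcal P}\mathcal K+\sigma^2\mu(\mathcal D^2+\mathcal D)\otimes\frac{\mathcal H}{(1+\sigma\mathcal P)^2},$$ $$\Delta(\mathcal C_2)=1\otimes\mathcal C_2+\mathcal C_2\otimes\frac{1}{1+\sigma\mathcal P}+2\sigma\mu\,\mathcal D\otimes\frac{1}{1+\sigma\mathcal P}\mathcal D-\sigma\mu(\mathcal D^2+\mathcal D)\otimes\frac{\sigma\mathcal P}{(1+\sigma\mathcal P)^2}.$$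
   Context: $U_\sigma(so_{\mu,\nu}(2,2))$ denotes the $\sigma$-adically completed associative algebra over $\mathbb{R}[[\sigma]]$ generated by $H,P,K,D,C_1,C_2$ subject to the relations $[K,H]=\nu\frac{e^{\sigma P}-1}{\sigma}$, $[K,P]=\mu e^{-\sigma P}H$, $[H,P]=0$, $[K,D]=0$, $[D,H]=H$, $[D,C_1]=-C_1$, $[H,C_1]=-2\nu D$, $[D,P]=\frac{1-e^{-\sigma P}}{\sigma}$, $[D,C_2]=-C_2-\sigma\mu D^2$, $[P,C_2]=2\mu D$, $[K,C_1]=\nu C_2+\sigma\mu\nu D^2$, $[K,C_2]=\mu C_1$, $[P,C_1]=-e^{-\sigma P}K-Ke^{-\sigma P}$, $[H,C_2]=2K+\sigma\mu(DH+HD)$, $[C_1,C_2]=-\sigma\mu(DC_1+C_1D)$. Its coproduct $\Delta$ is the algebra homomorphism determined by $\Delta(P)=1\otimes P+P\otimes 1$, $\Delta(D)=1\otimes D+D\otimes e^{-\sigma P}$, $\Delta(H)=1\otimes H+H\otimes e^{\sigma P}$, $\Delta(C_2)=1\otimes C_2+C_2\otimes e^{-\sigma P}$, $\Delta(K)=1\otimes K+K\otimes 1-\sigma\mu D\otimes e^{-\sigma P}H$, $\Delta(C_1)=1\otimes C_1+C_1\otimes e^{-\sigma P}-2\sigma D\otimes e^{-\sigma P}K+\sigma^2\mu(D^2+D)\otimes e^{-2\sigma P}H$. Note $1+\sigma\mathcal P=e^{\sigma P}$ is invertible. *)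

theory Defs
  imports Complex_Main
begin

definition comm :: "'a::ring \<Rightarrow> 'a \<Rightarrow> 'a" where
  "comm x y = x * y - y * x"

text \<open>s-adic topology on a ring with a distinguished central element s
  (the formal parameter sigma).  The ideal s^k A is two-sided because s is central.\<close>
definition sadic_lim :: "'a::ring_1 \<Rightarrow> (nat \<Rightarrow> 'a) \<Rightarrow> 'a \<Rightarrow> bool" where
  "sadic_lim s f L \<longleftrightarrow> (\<forall>k. \<exists>N. \<forall>n\<ge>N. \<exists>y. f n - L = s ^ k * y)"

definition sadic_cauchy :: "'a::ring_1 \<Rightarrow> (nat \<Rightarrow> 'a) \<Rightarrow> bool" where
  "sadic_cauchy s f \<longleftrightarrow> (\<forall>k. \<exists>N. \<forall>m\<ge>N. \<forall>n\<ge>N. \<exists>y. f m - f n = s ^ k * y)"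

definition sadic_separated :: "'a::ring_1 \<Rightarrow> bool" where
  "sadic_separated s \<longleftrightarrow> (\<forall>x. (\<forall>k. \<exists>y. x = s ^ k * y) \<longrightarrow> x = 0)"

definition sadic_complete :: "'a::ring_1 \<Rightarrow> bool" where
  "sadic_complete s \<longleftrightarrow> (\<forall>x. s * x = x * s) \<and> sadic_separated s \<and>
     (\<forall>f. sadic_cauchy s f \<longrightarrow> (\<exists>L. sadic_lim s f L))"

definition sadic_Lim :: "'a::ring_1 \<Rightarrow> (nat \<Rightarrow> 'a) \<Rightarrow> 'a" where
  "sadic_Lim s f = (THE L. sadic_lim s f L)"

definition sexp :: "'a::real_algebra_1 \<Rightarrow> 'a \<Rightarrow> 'a" where
  "sexp s X = sadic_Lim s (\<lambda>N. \<Sum>n<N. (1 / fact n) *\<^sub>R (s ^ n * X ^ n))"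

text \<open>sexpm1_div s X = (e^(s X) - 1)/s = sum_n s^n X^(n+1) / (n+1)!  (s-adic limit).\<close>
definition sexpm1_div :: "'a::real_algebra_1 \<Rightarrow> 'a \<Rightarrow> 'a" where
  "sexpm1_div s X = sadic_Lim s (\<lambda>N. \<Sum>n<N. (1 / fact (Suc n)) *\<^sub>R (s ^ n * X ^ Suc n))"

definition ring_inv :: "'a::ring_1 \<Rightarrow> 'a" where
  "ring_inv x = (THE y. x * y = 1 \<and> y * x = 1)"

end

theory Submission
  imports Defs
begin

definition sdiv :: "'a::ring_1 \<Rightarrow> nat \<Rightarrow> 'a \<Rightarrow> bool" where
  "sdiv s k z \<longleftrightarrow> (\<exists>y. z = s ^ k * y)"

definition ssum :: "'a::ring_1 \<Rightarrow> (nat \<Rightarrow> 'a) \<Rightarrow> 'a" where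
  "ssum s a = sadic_Lim s (\<lambda>N. \<Sum>n<N. a n)"

lemma sdiv_0[simp]: "sdiv s k 0"
  unfolding sdiv_def by (rule exI[of _ 0]) simp

lemma sdiv_add: "sdiv s k x \<Longrightarrow> sdiv s k y \<Longrightarrow> sdiv s k (x + y)"
  unfolding sdiv_def by (metis distrib_left)

lemma sdiv_diff: "sdiv s k x \<Longrightarrow> sdiv s k y \<Longrightarrow> sdiv s k (x - y)"
  unfolding sdiv_def by (metis right_diff_distrib)

lemma sdiv_uminus: "sdiv s k x \<Longrightarrow> sdiv s k (- x)"
  unfolding sdiv_def by (metis mult_minus_right)

lemma sdiv_mult_right: "sdiv s k x \<Longrightarrow> sdiv s k (x * w)"
  unfolding sdiv_def by (metis mult.assoc)

lemma sdiv_mult_left: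
  assumes c: "\<forall>x. s * x = x * s" and "sdiv s k x" shows "sdiv s k (w * x)"
proof -
  obtain y where y: "x = s ^ k * y" using assms(2) unfolding sdiv_def by blast
  have "w * s ^ k = s ^ k * w" using c by (metis power_commuting_commutes)
  then have "w * x = s ^ k * (w * y)" by (simp add: y mult.assoc[symmetric])
  then show ?thesis unfolding sdiv_def by blast
qed

lemma sdiv_scaleR: "sdiv s k (x::'a::real_algebra_1) \<Longrightarrow> sdiv s k (r *\<^sub>R x)"
  unfolding sdiv_def by (metis mult_scaleR_right)

lemma sdiv_mono: "k \<le> m \<Longrightarrow> sdiv s m x \<Longrightarrow> sdiv s k x"
  unfolding sdiv_def by (metis le_add_diff_inverse mult.assoc power_add)

lemma sdiv_pow: "k \<le> m \<Longrightarrow> sdiv s k (s ^ m * y)"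
  using sdiv_mono[of k m s "s ^ m * y"] unfolding sdiv_def by blast

lemma sdiv_sum: "(\<And>i. i \<in> A \<Longrightarrow> sdiv s k (f i)) \<Longrightarrow> sdiv s k (sum f A)"
proof (induction A rule: infinite_finite_induct)
  case (insert x F) then show ?case by (simp add: sdiv_add)
qed auto

lemma sadic_lim_sdiv: "sadic_lim s f L \<longleftrightarrow> (\<forall>k. \<exists>N. \<forall>n\<ge>N. sdiv s k (f n - L))"
  unfolding sadic_lim_def sdiv_def by blast

lemma lim_unique:
  assumes c: "sadic_complete s" and f: "sadic_lim s f L" and g: "sadic_lim s f M"
  shows "L = M"
proof -
  have "\<forall>k. \<exists>y. L - M = s ^ k * y"
  proof
    fix k
    obtain N1 where N1: "\<forall>n\<ge>N1. sdiv s k (f n - L)" using f unfolding sadic_lim_sdiv by blast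
    obtain N2 where N2: "\<forall>n\<ge>N2. sdiv s k (f n - M)" using g unfolding sadic_lim_sdiv by blast
    have "sdiv s k ((f (max N1 N2) - M) - (f (max N1 N2) - L))"
      using N1 N2 by (intro sdiv_diff[of s k "f (max N1 N2) - M" "f (max N1 N2) - L"]) auto
    then show "\<exists>y. L - M = s ^ k * y" unfolding sdiv_def by simp
  qed
  then have "L - M = 0" using c unfolding sadic_complete_def sadic_separated_def by blast
  then show ?thesis by simp
qed

lemma Lim_eq: "sadic_complete s \<Longrightarrow> sadic_lim s f L \<Longrightarrow> sadic_Lim s f = L"
  unfolding sadic_Lim_def using lim_unique by blast

lemma lim_close:
  assumes "sadic_lim s f L" "\<And>N. sdiv s N (f N - g N)"
  shows "sadic_lim s g L"
  unfolding sadic_lim_sdiv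
proof
  fix k
  obtain N where N: "\<forall>n\<ge>N. sdiv s k (f n - L)" using assms(1) unfolding sadic_lim_sdiv by blast
  have "\<forall>n\<ge>max N k. sdiv s k (g n - L)"
  proof (intro allI impI)
    fix n assume n: "n \<ge> max N k"
    have "sdiv s k (f n - g n)" using assms(2)[of n] sdiv_mono[of k n] n by auto
    moreover have "sdiv s k (f n - L)" using N n by auto
    ultimately have "sdiv s k ((f n - L) - (f n - g n))" by (rule sdiv_diff[rotated])
    then show "sdiv s k (g n - L)" by simp
  qed
  then show "\<exists>N. \<forall>n\<ge>N. sdiv s k (g n - L)" by blast
qed

lemma lim_add: "sadic_lim s f L \<Longrightarrow> sadic_lim s g M \<Longrightarrow> sadic_lim s (\<lambda>n. f n + g n) (L + M)"
  unfolding sadic_lim_sdiv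
proof
  fix k assume a: "\<forall>k. \<exists>N. \<forall>n\<ge>N. sdiv s k (f n - L)" and b: "\<forall>k. \<exists>N. \<forall>n\<ge>N. sdiv s k (g n - M)"
  obtain N1 where N1: "\<forall>n\<ge>N1. sdiv s k (f n - L)" using a by blast
  obtain N2 where N2: "\<forall>n\<ge>N2. sdiv s k (g n - M)" using b by blast
  have "\<forall>n\<ge>max N1 N2. sdiv s k (f n + g n - (L + M))"
  proof (intro allI impI)
    fix n assume "n \<ge> max N1 N2"
    then have "sdiv s k ((f n - L) + (g n - M))" using N1 N2 by (intro sdiv_add) auto
    then show "sdiv s k (f n + g n - (L + M))" by (simp add: algebra_simps)
  qed
  then show "\<exists>N. \<forall>n\<ge>N. sdiv s k (f n + g n - (L + M))" by blast
qed

lemma lim_map: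
  assumes "sadic_lim s f L" "\<And>x k. sdiv s k x \<Longrightarrow> sdiv s k (h x)"
    "\<And>n. h (f n - L) = g n - M"
  shows "sadic_lim s g M"
  using assms unfolding sadic_lim_sdiv by metis

lemma lim_uminus: "sadic_lim s f L \<Longrightarrow> sadic_lim s (\<lambda>n. - f n) (- L)"
  by (rule lim_map[where h=uminus]) (auto simp: sdiv_uminus)

lemma lim_diff: "sadic_lim s f L \<Longrightarrow> sadic_lim s g M \<Longrightarrow> sadic_lim s (\<lambda>n. f n - g n) (L - M)"
  using lim_add[OF _ lim_uminus, of s f L g M] by simp

lemma lim_mult_right: "sadic_lim s f L \<Longrightarrow> sadic_lim s (\<lambda>n. f n * w) (L * w)"
  by (rule lim_map[where h="\<lambda>x. x * w"]) (auto simp: sdiv_mult_right algebra_simps)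

lemma lim_mult_left: "\<forall>x. s * x = x * s \<Longrightarrow> sadic_lim s f L \<Longrightarrow> sadic_lim s (\<lambda>n. w * f n) (w * L)"
  by (rule lim_map[where h="\<lambda>x. w * x"]) (auto simp: sdiv_mult_left algebra_simps)

lemma lim_scaleR: "sadic_lim s f (L::'a::real_algebra_1) \<Longrightarrow> sadic_lim s (\<lambda>n. r *\<^sub>R f n) (r *\<^sub>R L)"
  by (rule lim_map[where h="\<lambda>x. r *\<^sub>R x"]) (auto simp: sdiv_scaleR algebra_simps)

lemma lim_const: "sadic_lim s (\<lambda>n. c) c"
  unfolding sadic_lim_sdiv by simp

lemma lim_Suc: "sadic_lim s f L \<Longrightarrow> sadic_lim s (\<lambda>n. f (Suc n)) L"
  unfolding sadic_lim_sdiv by (meson le_SucI)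

lemma lim_mult:
  assumes c: "\<forall>x. s * x = x * s" and f: "sadic_lim s f L" and g: "sadic_lim s g M"
  shows "sadic_lim s (\<lambda>n. f n * g n) (L * M)"
  unfolding sadic_lim_sdiv
proof
  fix k
  obtain N1 where N1: "\<forall>n\<ge>N1. sdiv s k (f n - L)" using f unfolding sadic_lim_sdiv by blast
  obtain N2 where N2: "\<forall>n\<ge>N2. sdiv s k (g n - M)" using g unfolding sadic_lim_sdiv by blast
  have "\<forall>n\<ge>max N1 N2. sdiv s k (f n * g n - L * M)"
  proof (intro allI impI)
    fix n assume n: "n \<ge> max N1 N2"
    have "sdiv s k ((f n - L) * g n + L * (g n - M))"
      using N1 N2 n by (intro sdiv_add sdiv_mult_right sdiv_mult_left[OF c]) auto
    then show "sdiv s k (f n * g n - L * M)" by (simp add: algebra_simps)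
  qed
  then show "\<exists>N. \<forall>n\<ge>N. sdiv s k (f n * g n - L * M)" by blast
qed

lemma okseq_rep: "(\<And>n. sdiv s n (a n)) \<Longrightarrow> \<exists>Y. \<forall>n. a n = s ^ n * Y n"
  unfolding sdiv_def by metis

lemma ssum_lim:
  assumes c: "sadic_complete s" and a: "\<And>n. sdiv s n (a n)"
  shows "sadic_lim s (\<lambda>N. \<Sum>n<N. a n) (ssum s a)"
proof -
  obtain Y where Y: "\<And>n. a n = s ^ n * Y n" using okseq_rep[OF a] by blast
  have key: "sdiv s k ((\<Sum>n<N. a n) - (\<Sum>n<k. a n))" if "k \<le> N" for k N
  proof -
    have "(\<Sum>n<N. a n) - (\<Sum>n<k. a n) = (\<Sum>n\<in>{k..<N}. a n)"
      using that by (metis add_diff_cancel_left' lessThan_atLeast0 sum.atLeastLessThan_concat zero_le)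
    moreover have "sdiv s k (\<Sum>n\<in>{k..<N}. a n)"
      by (rule sdiv_sum) (auto simp: Y intro: sdiv_pow)
    ultimately show ?thesis by simp
  qed
  have "sadic_cauchy s (\<lambda>N. \<Sum>n<N. a n)"
    unfolding sadic_cauchy_def
  proof
    fix k
    have "\<forall>m\<ge>k. \<forall>n\<ge>k. sdiv s k ((\<Sum>i<m. a i) - (\<Sum>i<n. a i))"
    proof (intro allI impI)
      fix m n assume "m \<ge> k" "n \<ge> k"
      then have "sdiv s k (((\<Sum>i<m. a i) - (\<Sum>i<k. a i)) - ((\<Sum>i<n. a i) - (\<Sum>i<k. a i)))"
        by (intro sdiv_diff key)
      then show "sdiv s k ((\<Sum>i<m. a i) - (\<Sum>i<n. a i))" by simp
    qed
    then show "\<exists>N. \<forall>m\<ge>N. \<forall>n\<ge>N. \<exists>y. (\<Sum>n<m. a n) - (\<Sum>n<n. a n) = s ^ k * y"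
      unfolding sdiv_def by blast
  qed
  then obtain L where L: "sadic_lim s (\<lambda>N. \<Sum>n<N. a n) L"
    using c unfolding sadic_complete_def by blast
  then show ?thesis unfolding ssum_def using Lim_eq[OF c L] by simp
qed


lemma compl_central: "sadic_complete s \<Longrightarrow> \<forall>x. s * x = x * s"
  unfolding sadic_complete_def by blast

lemma ssum_eqI: "sadic_complete s \<Longrightarrow> sadic_lim s (\<lambda>N. \<Sum>n<N. a n) L \<Longrightarrow> ssum s a = L"
  unfolding ssum_def by (rule Lim_eq)

lemma ssum_add:
  assumes c: "sadic_complete s" and a: "\<And>n. sdiv s n (a n)" and b: "\<And>n. sdiv s n (b n)"
  shows "ssum s (\<lambda>n. a n + b n) = ssum s a + ssum s b"
  by (rule ssum_eqI[OF c]) (simp add: sum.distrib lim_add ssum_lim[OF c a] ssum_lim[OF c b])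

lemma ssum_diff:
  assumes c: "sadic_complete s" and a: "\<And>n. sdiv s n (a n)" and b: "\<And>n. sdiv s n (b n)"
  shows "ssum s (\<lambda>n. a n - b n) = ssum s a - ssum s b"
  by (rule ssum_eqI[OF c]) (simp add: sum_subtractf lim_diff ssum_lim[OF c a] ssum_lim[OF c b])

lemma ssum_mult_left:
  assumes c: "sadic_complete s" and a: "\<And>n. sdiv s n (a n)"
  shows "ssum s (\<lambda>n. w * a n) = w * ssum s a"
  by (rule ssum_eqI[OF c]) (use lim_mult_left[OF compl_central[OF c] ssum_lim[OF c a], of w] in \<open>simp add: sum_distrib_left\<close>)

lemma ssum_mult_right:
  assumes c: "sadic_complete s" and a: "\<And>n. sdiv s n (a n)"
  shows "ssum s (\<lambda>n. a n * w) = ssum s a * w"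
  by (rule ssum_eqI[OF c]) (use lim_mult_right[OF ssum_lim[OF c a], of w] in \<open>simp add: sum_distrib_right\<close>)

lemma ssum_scaleR:
  assumes c: "sadic_complete s" and a: "\<And>n. sdiv s n (a n)"
  shows "ssum s (\<lambda>n. r *\<^sub>R a n) = r *\<^sub>R ssum s (a::nat \<Rightarrow> 'a::real_algebra_1)"
  by (rule ssum_eqI[OF c]) (simp add: scaleR_sum_right[symmetric] lim_scaleR ssum_lim[OF c a])

lemma ssum_zero: "sadic_complete s \<Longrightarrow> ssum s (\<lambda>n. 0) = 0"
  by (rule ssum_eqI) (simp_all add: lim_const)

lemma ssum_shift:
  assumes c: "sadic_complete s" and a: "\<And>n. sdiv s n (a n)"
  shows "ssum s a = a 0 + ssum s (\<lambda>n. a (Suc n))"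
proof -
  have a': "\<And>n. sdiv s n (a (Suc n))" using a sdiv_mono[of _ "Suc _"] by (meson le_SucI order_refl)
  have "sadic_lim s (\<lambda>N. \<Sum>n<Suc N. a n) (ssum s a)" using lim_Suc[OF ssum_lim[OF c a]] .
  then have "sadic_lim s (\<lambda>N. a 0 + (\<Sum>n<N. a (Suc n))) (ssum s a)"
    by (simp only: sum.lessThan_Suc_shift)
  then have "sadic_lim s (\<lambda>N. a 0 + (\<Sum>n<N. a (Suc n)) - a 0) (ssum s a - a 0)"
    using lim_diff lim_const by blast
  then have "sadic_lim s (\<lambda>N. (\<Sum>n<N. a (Suc n))) (ssum s a - a 0)" by simp
  then have "ssum s (\<lambda>n. a (Suc n)) = ssum s a - a 0" by (rule ssum_eqI[OF c])
  then show ?thesis by simp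
qed

lemma ssum_cauchy:
  assumes c: "sadic_complete s" and a: "\<And>n. sdiv s n (a n)" and b: "\<And>n. sdiv s n (b n)"
  shows "ssum s a * ssum s b = ssum s (\<lambda>n. \<Sum>i\<le>n. a i * b (n - i))"
proof -
  obtain Y where Y: "\<And>n. a n = s ^ n * Y n" using okseq_rep[OF a] by blast
  obtain Z where Z: "\<And>n. b n = s ^ n * Z n" using okseq_rep[OF b] by blast
  have ab: "a i * b j = s ^ (i + j) * (Y i * Z j)" for i j
  proof -
    have "Y i * s ^ j = s ^ j * Y i" using compl_central[OF c] by (metis power_commuting_commutes)
    then show ?thesis by (simp add: Y Z power_add mult.assoc) (metis mult.assoc)
  qed
  have cs: "\<And>n. sdiv s n (\<Sum>i\<le>n. a i * b (n - i))"
    by (rule sdiv_sum) (simp add: ab sdiv_pow)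
  have "sadic_lim s (\<lambda>N. (\<Sum>n<N. a n) * (\<Sum>n<N. b n)) (ssum s a * ssum s b)"
    by (rule lim_mult[OF compl_central[OF c] ssum_lim[OF c a] ssum_lim[OF c b]]) 
  then have "sadic_lim s (\<lambda>N. \<Sum>n<N. \<Sum>i\<le>n. a i * b (n - i)) (ssum s a * ssum s b)"
  proof (rule lim_close)
    fix N :: nat
    let ?T = "{(i::nat,j::nat). i + j < N}" and ?S = "{..<N} \<times> {..<N}"
    have sub: "?T \<subseteq> ?S" by (auto simp: subset_iff)
    have fin: "finite ?S" by simp
    have e1: "(\<Sum>n<N. a n) * (\<Sum>n<N. b n) = (\<Sum>(i,j)\<in>?S. a i * b j)"
      by (simp add: sum_product sum.cartesian_product)
    have e2: "(\<Sum>n<N. \<Sum>i\<le>n. a i * b (n - i)) = (\<Sum>(i,j)\<in>?T. a i * b j)"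
      by (rule sum.triangle_reindex[symmetric])
    have "(\<Sum>(i,j)\<in>?S. a i * b j) = (\<Sum>(i,j)\<in>?S - ?T. a i * b j) + (\<Sum>(i,j)\<in>?T. a i * b j)"
      by (rule sum.subset_diff[OF sub fin])
    moreover have "sdiv s N (\<Sum>(i,j)\<in>?S - ?T. a i * b j)"
      by (rule sdiv_sum) (auto simp: ab intro!: sdiv_pow)
    ultimately show "sdiv s N ((\<Sum>n<N. a n) * (\<Sum>n<N. b n) - (\<Sum>n<N. \<Sum>i\<le>n. a i * b (n - i)))"
      by (simp add: e1 e2)
  qed
  then show ?thesis by (rule ssum_eqI[OF c, symmetric])
qed

lemma ssum_hom:
  fixes h :: "'a::ring_1 \<Rightarrow> 'b::ring_1"
  assumes c: "sadic_complete s" and c': "sadic_complete s'" and a: "\<And>n. sdiv s n (a n)"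
    and hadd: "\<And>x y. h (x + y) = h x + h y" and hmul: "\<And>x y. h (x * y) = h x * h y"
    and h1: "h 1 = 1" and hs: "h s = s'"
  shows "h (ssum s a) = ssum s' (\<lambda>n. h (a n))"
proof -
  have h0: "h 0 = 0" using hadd[of 0 0] by simp
  have hdiff: "h (x - y) = h x - h y" for x y using hadd[of "x - y" y] by simp
  have hpow: "h (s ^ k) = s' ^ k" for k by (induction k) (simp_all add: h1 hmul hs)
  have hsum: "h (\<Sum>n<N. a n) = (\<Sum>n<N. h (a n))" for N by (induction N) (simp_all add: h0 hadd)
  have hdiv: "sdiv s k x \<Longrightarrow> sdiv s' k (h x)" for k x
    unfolding sdiv_def using hmul hpow by metis
  have "sadic_lim s' (\<lambda>N. \<Sum>n<N. h (a n)) (h (ssum s a))"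
    using ssum_lim[OF c a] unfolding sadic_lim_sdiv by (metis hdiff hsum hdiv)
  then show ?thesis by (rule ssum_eqI[OF c', symmetric])
qed

subsection \<open>Exponential series\<close>

definition eterm :: "'a::real_algebra_1 \<Rightarrow> 'a \<Rightarrow> nat \<Rightarrow> 'a" where
  "eterm s x n = (1 / fact n) *\<^sub>R (s ^ n * x ^ n)"

definition pterm :: "'a::real_algebra_1 \<Rightarrow> 'a \<Rightarrow> nat \<Rightarrow> 'a" where
  "pterm s x n = (1 / fact (Suc n)) *\<^sub>R (s ^ n * x ^ Suc n)"

lemma sexp_ssum: "sexp s x = ssum s (eterm s x)"
  unfolding sexp_def ssum_def eterm_def ..

lemma sexpm1_ssum: "sexpm1_div s x = ssum s (pterm s x)"
  unfolding sexpm1_div_def ssum_def pterm_def ..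

lemma eterm_ok: "sdiv s n (eterm s x n)"
  unfolding eterm_def by (rule sdiv_scaleR, rule sdiv_pow) simp

lemma pterm_ok: "sdiv s n (pterm s x n)"
  unfolding pterm_def by (rule sdiv_scaleR, rule sdiv_pow) simp

lemma pow_central: "\<forall>x. (s::'a::ring_1) * x = x * s \<Longrightarrow> s ^ n * y = y * s ^ n"
  using power_commuting_commutes[of s y n] by simp

lemma sexp_eq:
  assumes c: "sadic_complete s"
  shows "sexp s x = 1 + s * sexpm1_div s x"
proof -
  have "sexp s x = eterm s x 0 + ssum s (\<lambda>n. eterm s x (Suc n))"
    unfolding sexp_ssum by (rule ssum_shift[OF c eterm_ok])
  also have "(\<lambda>n. eterm s x (Suc n)) = (\<lambda>n. s * pterm s x n)"
    by (rule ext) (simp add: eterm_def pterm_def mult.assoc del: fact_Suc)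
  also have "ssum s (\<lambda>n. s * pterm s x n) = s * sexpm1_div s x"
    unfolding sexpm1_ssum by (rule ssum_mult_left[OF c pterm_ok])
  finally show ?thesis by (simp add: eterm_def)
qed

lemma sexpm1_zero:
  assumes c: "sadic_complete s" shows "sexpm1_div s 0 = 0"
proof -
  have "pterm s 0 = (\<lambda>n. 0)" by (rule ext) (simp add: pterm_def)
  then show ?thesis unfolding sexpm1_ssum using ssum_zero[OF c] by simp
qed

lemma sexp_zero: "sadic_complete s \<Longrightarrow> sexp s 0 = 1"
  by (simp add: sexp_eq sexpm1_zero)

definition Sx :: "'a::real_algebra_1 \<Rightarrow> nat \<Rightarrow> 'a" where
  "Sx x n = x^n /\<^sub>R fact n"

lemma S_add_commuting:
  fixes x y :: "'a::real_algebra_1"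
  assumes comm: "x * y = y * x"
  shows "Sx (x + y) n = (\<Sum>i\<le>n. Sx x i * Sx y (n - i))"
proof (induct n)
  case 0
  show ?case
    unfolding Sx_def by simp
next
  case (Suc n)
  have S_Suc: "\<And>x n. Sx x (Suc n) = (x * Sx x n) /\<^sub>R real (Suc n)"
    unfolding Sx_def by (simp del: mult_Suc)
  have times_S: "\<And>x n. x * Sx x n = real (Suc n) *\<^sub>R Sx x (Suc n)"
    unfolding Sx_def by (simp add: scaleR_scaleR mult_scaleR_right del: of_nat_Suc)
  have S_comm: "\<And>n. Sx x n * y = y * Sx x n"
    by (simp add: power_commuting_commutes comm Sx_def)
  have "real (Suc n) *\<^sub>R Sx (x + y) (Suc n) = (x + y) * (\<Sum>i\<le>n. Sx x i * Sx y (n - i))"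
    by (metis Suc.hyps times_S)
  also have "\<dots> = x * (\<Sum>i\<le>n. Sx x i * Sx y (n - i)) + y * (\<Sum>i\<le>n. Sx x i * Sx y (n - i))"
    by (rule distrib_right)
  also have "\<dots> = (\<Sum>i\<le>n. x * Sx x i * Sx y (n - i)) + (\<Sum>i\<le>n. Sx x i * y * Sx y (n - i))"
    by (simp add: sum_distrib_left ac_simps S_comm)
  also have "\<dots> = (\<Sum>i\<le>n. x * Sx x i * Sx y (n - i)) + (\<Sum>i\<le>n. Sx x i * (y * Sx y (n - i)))"
    by (simp add: ac_simps)
  also have "\<dots> = (\<Sum>i\<le>n. real (Suc i) *\<^sub>R (Sx x (Suc i) * Sx y (n - i)))
                + (\<Sum>i\<le>n. real (Suc n - i) *\<^sub>R (Sx x i * Sx y (Suc n - i)))"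
    by (simp add: times_S Suc_diff_le)
  also have "(\<Sum>i\<le>n. real (Suc i) *\<^sub>R (Sx x (Suc i) * Sx y (n - i)))
           = (\<Sum>i\<le>Suc n. real i *\<^sub>R (Sx x i * Sx y (Suc n - i)))"
    by (subst sum.atMost_Suc_shift) simp
  also have "(\<Sum>i\<le>n. real (Suc n - i) *\<^sub>R (Sx x i * Sx y (Suc n - i)))
           = (\<Sum>i\<le>Suc n. real (Suc n - i) *\<^sub>R (Sx x i * Sx y (Suc n - i)))"
    by simp
  also have "(\<Sum>i\<le>Suc n. real i *\<^sub>R (Sx x i * Sx y (Suc n - i)))
           + (\<Sum>i\<le>Suc n. real (Suc n - i) *\<^sub>R (Sx x i * Sx y (Suc n - i)))
           = (\<Sum>i\<le>Suc n. real (Suc n) *\<^sub>R (Sx x i * Sx y (Suc n - i)))"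
    by (simp flip: sum.distrib scaleR_add_left of_nat_add)
  also have "\<dots> = real (Suc n) *\<^sub>R (\<Sum>i\<le>Suc n. Sx x i * Sx y (Suc n - i))"
    by (simp only: scaleR_right.sum)
  finally show "Sx (x + y) (Suc n) = (\<Sum>i\<le>Suc n. Sx x i * Sx y (Suc n - i))"
    by (simp del: sum.cl_ivl_Suc)
qed

lemma term_S: "(1 / fact n) *\<^sub>R (s ^ k * (x::'a::real_algebra_1) ^ n) = s ^ k * Sx x n"
  unfolding Sx_def by (simp add: divide_inverse_commute)

lemma prod_pow_s:
  fixes A :: "'a::monoid_mult"
  assumes h: "A * s ^ j = s ^ j * A" shows "(s ^ i * A) * (s ^ j * B) = s ^ (i + j) * (A * B)"
proof -
  have "A * (s ^ j * B) = (A * s ^ j) * B" by (simp only: mult.assoc)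
  also have "\<dots> = (s ^ j * A) * B" by (simp only: h)
  also have "\<dots> = s ^ j * (A * B)" by (simp only: mult.assoc)
  finally have e: "A * (s ^ j * B) = s ^ j * (A * B)" .
  have "(s ^ i * A) * (s ^ j * B) = s ^ i * (A * (s ^ j * B))" by (simp only: mult.assoc)
  also have "\<dots> = s ^ i * (s ^ j * (A * B))" by (simp only: e)
  also have "\<dots> = s ^ (i + j) * (A * B)" by (simp only: mult.assoc power_add)
  finally show ?thesis .
qed

lemma sexpm1_add:
  assumes c: "sadic_complete s" and xy: "x * y = y * x"
  shows "sexpm1_div s (x + y) = sexpm1_div s x + sexp s x * sexpm1_div s y"
proof -
  have cen: "\<forall>z. s * z = z * s" by (rule compl_central[OF c])
  have et: "eterm s x i = s ^ i * Sx x i" for x i unfolding eterm_def by (rule term_S)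
  have pt: "pterm s x i = s ^ i * Sx x (Suc i)" for x i unfolding pterm_def by (rule term_S)
  have prod: "eterm s x i * pterm s y j = s ^ (i + j) * (Sx x i * Sx y (Suc j))" for i j
    unfolding et pt by (rule prod_pow_s) (rule pow_central[OF cen, symmetric])
  have bin: "pterm s (x + y) n = pterm s x n + (\<Sum>i\<le>n. eterm s x i * pterm s y (n - i))" for n
  proof -
    have "pterm s (x + y) n = s ^ n * (\<Sum>i\<le>Suc n. Sx x i * Sx y (Suc n - i))"
      unfolding pt S_add_commuting[OF xy] ..
    also have "\<dots> = s ^ n * ((\<Sum>i\<le>n. Sx x i * Sx y (Suc n - i)) + Sx x (Suc n) * Sx y 0)"
      by (simp only: sum.atMost_Suc diff_self_eq_0)
    also have "\<dots> = s ^ n * Sx x (Suc n) + (\<Sum>i\<le>n. s ^ n * (Sx x i * Sx y (Suc n - i)))"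
      by (simp add: distrib_left sum_distrib_left Sx_def)
    also have "(\<Sum>i\<le>n. s ^ n * (Sx x i * Sx y (Suc n - i))) = (\<Sum>i\<le>n. eterm s x i * pterm s y (n - i))"
      by (rule sum.cong) (simp_all add: prod Suc_diff_le)
    finally show ?thesis by (simp add: pt)
  qed
  have cok: "\<And>n. sdiv s n (\<Sum>i\<le>n. eterm s x i * pterm s y (n - i))"
    by (rule sdiv_sum) (simp add: prod sdiv_pow)
  have "sexpm1_div s (x + y) = ssum s (\<lambda>n. pterm s x n + (\<Sum>i\<le>n. eterm s x i * pterm s y (n - i)))"
    unfolding sexpm1_ssum bin ..
  also have "\<dots> = sexpm1_div s x + ssum s (\<lambda>n. \<Sum>i\<le>n. eterm s x i * pterm s y (n - i))"
    unfolding sexpm1_ssum by (rule ssum_add[OF c pterm_ok cok])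
  also have "ssum s (\<lambda>n. \<Sum>i\<le>n. eterm s x i * pterm s y (n - i)) = sexp s x * sexpm1_div s y"
    unfolding sexpm1_ssum sexp_ssum by (rule ssum_cauchy[OF c eterm_ok pterm_ok, symmetric])
  finally show ?thesis .
qed

lemma sexp_add:
  assumes c: "sadic_complete s" and xy: "x * y = y * x"
  shows "sexp s (x + y) = sexp s x * sexp s y"
proof -
  have cen: "\<forall>z. s * z = z * s" by (rule compl_central[OF c])
  have "sexp s x * sexp s y = sexp s x * (1 + s * sexpm1_div s y)" by (simp add: sexp_eq[OF c, of y])
  also have "\<dots> = sexp s x + (sexp s x * s) * sexpm1_div s y" by (simp add: distrib_left mult.assoc)
  also have "\<dots> = sexp s x + s * (sexp s x * sexpm1_div s y)" using cen by (simp add: mult.assoc)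
  also have "\<dots> = 1 + s * sexpm1_div s (x + y)"
    by (simp add: sexp_eq[OF c, of x] sexpm1_add[OF c xy] distrib_left add.assoc)
  finally show ?thesis by (simp add: sexp_eq[OF c])
qed

lemma sexp_inv:
  assumes c: "sadic_complete s"
  shows "sexp s x * sexp s (- x) = 1" "sexp s (- x) * sexp s x = 1"
proof -
  have "sexp s (x + - x) = sexp s x * sexp s (- x)" by (rule sexp_add[OF c]) simp
  then show "sexp s x * sexp s (- x) = 1" by (simp add: sexp_zero[OF c])
  have "sexp s (- x + x) = sexp s (- x) * sexp s x" by (rule sexp_add[OF c]) simp
  then show "sexp s (- x) * sexp s x = 1" by (simp add: sexp_zero[OF c])
qed

lemma sexpm1_neg:
  assumes c: "sadic_complete s"
  shows "sexp s x * sexpm1_div s (- x) = - sexpm1_div s x"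
proof -
  have "sexpm1_div s (x + - x) = sexpm1_div s x + sexp s x * sexpm1_div s (- x)"
    by (rule sexpm1_add[OF c]) simp
  then have "0 = sexpm1_div s x + sexp s x * sexpm1_div s (- x)" by (simp add: sexpm1_zero[OF c])
  then show ?thesis by (simp add: eq_neg_iff_add_eq_0 add.commute)
qed

lemma sexpm1_commute:
  assumes c: "sadic_complete s" and yx: "y * x = x * y"
  shows "y * sexpm1_div s x = sexpm1_div s x * y"
proof -
  have cen: "\<forall>z. s * z = z * s" by (rule compl_central[OF c])
  have t: "y * pterm s x n = pterm s x n * y" for n
  proof -
    have a: "y * s ^ n = s ^ n * y" using pow_central[OF cen] by simp
    have b: "y * x ^ Suc n = x ^ Suc n * y" by (rule power_commuting_commutes[OF yx[symmetric], symmetric])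
    have "y * (s ^ n * x ^ Suc n) = (y * s ^ n) * x ^ Suc n" by (simp only: mult.assoc)
    also have "\<dots> = s ^ n * (y * x ^ Suc n)" by (simp only: a mult.assoc)
    also have "\<dots> = (s ^ n * x ^ Suc n) * y" by (simp only: b mult.assoc)
    finally show ?thesis unfolding pterm_def
      by (simp only: mult_scaleR_left mult_scaleR_right)
  qed
  have "y * sexpm1_div s x = ssum s (\<lambda>n. y * pterm s x n)"
    unfolding sexpm1_ssum by (rule ssum_mult_left[OF c pterm_ok, symmetric])
  also have "\<dots> = ssum s (\<lambda>n. pterm s x n * y)" by (simp add: t)
  also have "\<dots> = sexpm1_div s x * y"
    unfolding sexpm1_ssum by (rule ssum_mult_right[OF c pterm_ok])
  finally show ?thesis .
qed

lemma sexp_commute: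
  assumes c: "sadic_complete s" and yx: "y * x = x * y"
  shows "y * sexp s x = sexp s x * y"
proof -
  have cen: "\<forall>z. s * z = z * s" by (rule compl_central[OF c])
  have "y * (s * sexpm1_div s x) = (y * s) * sexpm1_div s x" by (simp add: mult.assoc)
  also have "\<dots> = s * (y * sexpm1_div s x)" using cen by (simp add: mult.assoc)
  also have "\<dots> = s * (sexpm1_div s x * y)" by (simp add: sexpm1_commute[OF c yx])
  finally show ?thesis by (simp add: sexp_eq[OF c] distrib_left distrib_right mult.assoc)
qed

lemma comm_mult: "comm c (a * b) = comm c a * b + a * comm c (b::'a::ring)"
  unfolding comm_def by (simp add: algebra_simps)

lemma pow_comm1:
  fixes x :: "'a::real_algebra_1"
  assumes dx: "comm d x = e" and xe: "x * e = e * x"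
  shows "comm d (x ^ m) = real m *\<^sub>R (x ^ (m - 1) * e)"
proof (induction m)
  case 0 then show ?case by (simp add: comm_def)
next
  case (Suc m)
  have ex: "e * x ^ m = x ^ m * e" by (rule power_commuting_commutes[OF xe, symmetric])
  have "comm d (x ^ Suc m) = e * x ^ m + x * (real m *\<^sub>R (x ^ (m - 1) * e))"
    by (simp only: power_Suc comm_mult dx Suc.IH)
  also have "x * (real m *\<^sub>R (x ^ (m - 1) * e)) = real m *\<^sub>R (x ^ m * e)"
  proof (cases m)
    case 0 then show ?thesis by simp
  next
    case (Suc k) then show ?thesis by (simp add: mult_scaleR_right mult.assoc)
  qed
  finally show ?case by (simp add: ex scaleR_add_left algebra_simps)
qed

lemma pow_comm2:
  fixes x :: "'a::real_algebra_1"
  assumes cx: "comm c x = d" and dx: "comm d x = e" and xe: "x * e = e * x"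
  shows "comm c (x ^ Suc n) = real (Suc n) *\<^sub>R (x ^ n * d) + real (Suc n choose 2) *\<^sub>R (x ^ (n - 1) * e)"
proof (induction n)
  case 0 then show ?case by (simp add: cx)
next
  case (Suc n)
  have dxn: "d * x ^ Suc n = x ^ Suc n * d + real (Suc n) *\<^sub>R (x ^ n * e)"
    using pow_comm1[OF dx xe, of "Suc n"] unfolding comm_def by (simp add: algebra_simps)
  have "comm c (x ^ Suc (Suc n)) = d * x ^ Suc n + x * comm c (x ^ Suc n)"
    by (simp only: power_Suc[of x "Suc n"] comm_mult cx)
  also have "x * comm c (x ^ Suc n) = real (Suc n) *\<^sub>R (x ^ Suc n * d) + real (Suc n choose 2) *\<^sub>R (x ^ n * e)"
    (is "_ = ?R")
  proof -
    have "x * comm c (x ^ Suc n) = real (Suc n) *\<^sub>R ((x * x ^ n) * d) + real (Suc n choose 2) *\<^sub>R ((x * x ^ (n - 1)) * e)"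
      by (simp only: Suc.IH distrib_left mult_scaleR_right mult.assoc)
    also have "\<dots> = ?R"
    proof (cases n)
      case 0 then show ?thesis by (simp add: binomial_eq_0)
    next
      case (Suc k) then show ?thesis by simp
    qed
    finally show ?thesis .
  qed
  finally have "comm c (x ^ Suc (Suc n)) = (1 + real (Suc n)) *\<^sub>R (x ^ Suc n * d)
       + (real (Suc n) + real (Suc n choose 2)) *\<^sub>R (x ^ n * e)"
    by (simp only: dxn scaleR_add_left) (simp add: algebra_simps)
  moreover have "real (Suc (Suc n) choose 2) = real (Suc n) + real (Suc n choose 2)"
    by (simp add: numeral_2_eq_2)
  ultimately show ?case by simp
qed

lemma coef2: "real (Suc (Suc m) choose 2) / fact (Suc (Suc m)) = 1 / 2 * (1 / fact m)"
proof -
  have "2 * (Suc (Suc m) choose 2) = Suc (Suc m) * Suc m"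
    by (simp add: choose_two)
  then have h: "real (Suc (Suc m) choose 2) = real (Suc (Suc m)) * real (Suc m) / 2"
    by (metis of_nat_mult of_nat_numeral nonzero_mult_div_cancel_left zero_neq_numeral)
  have f: "(fact (Suc (Suc m)) :: real) = real (Suc (Suc m)) * real (Suc m) * fact m"
    by (simp only: fact_Suc of_nat_mult mult.assoc)
  have p: "real (Suc (Suc m)) * real (Suc m) \<noteq> 0" by simp
  have q: "(fact m :: real) \<noteq> 0" by simp
  have g: "\<And>P F::real. P \<noteq> 0 \<Longrightarrow> F \<noteq> 0 \<Longrightarrow> (P / 2) / (P * F) = 1 / 2 * (1 / F)"
    by (simp add: field_simps)
  show ?thesis unfolding h f by (rule g[OF p q])
qed

lemma comm_scale_pow:
  assumes cen: "\<forall>z. s * z = z * s"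
  shows "comm c (r *\<^sub>R (s ^ n * z)) = r *\<^sub>R (s ^ n * comm c (z::'a::real_algebra_1))"
proof -
  have "c * s ^ n = s ^ n * c" using pow_central[OF cen] by simp
  then have "c * (s ^ n * z) = s ^ n * (c * z)" by (metis mult.assoc)
  then show ?thesis unfolding comm_def
    by (simp add: mult_scaleR_left mult_scaleR_right scaleR_diff_right right_diff_distrib mult.assoc)
qed

lemma sexpm1_deriv:
  assumes c: "sadic_complete s" and cx: "comm c x = d" and dx: "comm d x = e" and xe: "x * e = e * x"
  shows "comm c (sexpm1_div s x) = sexp s x * d + (1/2) *\<^sub>R (s * (sexp s x * e))"
proof -
  have cen: "\<forall>z. s * z = z * s" by (rule compl_central[OF c])
  define B where "B n = (real (Suc n choose 2) / fact (Suc n)) *\<^sub>R (s ^ n * (x ^ (n - 1) * e))" for n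
  have Bok: "sdiv s n (B n)" for n unfolding B_def by (rule sdiv_scaleR, rule sdiv_pow) simp
  have tn: "comm c (pterm s x n) = eterm s x n * d + B n" for n
  proof -
    have "comm c (pterm s x n) = (1 / fact (Suc n)) *\<^sub>R (s ^ n * comm c (x ^ Suc n))"
      unfolding pterm_def by (rule comm_scale_pow[OF cen])
    also have "\<dots> = (1 / fact (Suc n) * real (Suc n)) *\<^sub>R (s ^ n * (x ^ n * d))
        + (1 / fact (Suc n) * real (Suc n choose 2)) *\<^sub>R (s ^ n * (x ^ (n - 1) * e))"
      by (simp only: pow_comm2[OF cx dx xe] distrib_left scaleR_right_distrib mult_scaleR_right scaleR_scaleR)
    also have "1 / fact (Suc n) * real (Suc n) = 1 / (fact n :: real)"
    proof -
      have g: "\<And>P F::real. P \<noteq> 0 \<Longrightarrow> F \<noteq> 0 \<Longrightarrow> 1 / (P * F) * P = 1 / F" by simp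
      show ?thesis unfolding fact_Suc of_nat_mult by (rule g) simp_all
    qed
    finally show ?thesis unfolding eterm_def B_def by (simp add: mult_scaleR_left mult.assoc)
  qed
  have B0: "B 0 = 0" unfolding B_def by (simp add: binomial_eq_0)
  have BS: "B (Suc m) = (1/2) *\<^sub>R (s * (eterm s x m * e))" for m
  proof -
    have "B (Suc m) = (1 / 2 * (1 / fact m)) *\<^sub>R (s ^ Suc m * (x ^ m * e))"
      unfolding B_def coef2 by simp
    then show ?thesis unfolding eterm_def by (simp add: mult_scaleR_left mult_scaleR_right mult.assoc)
  qed
  have ok1: "sdiv s n (eterm s x n * d)" for n by (rule sdiv_mult_right[OF eterm_ok])
  have ok2: "sdiv s n (eterm s x n * e)" for n by (rule sdiv_mult_right[OF eterm_ok])
  have "comm c (sexpm1_div s x) = ssum s (\<lambda>n. c * pterm s x n) - ssum s (\<lambda>n. pterm s x n * c)"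
    unfolding comm_def sexpm1_ssum ssum_mult_left[OF c pterm_ok] ssum_mult_right[OF c pterm_ok] ..
  also have "\<dots> = ssum s (\<lambda>n. comm c (pterm s x n))"
    unfolding comm_def
    by (rule ssum_diff[OF c sdiv_mult_left[OF cen pterm_ok] sdiv_mult_right[OF pterm_ok], symmetric])
  also have "\<dots> = ssum s (\<lambda>n. eterm s x n * d + B n)" by (simp only: tn)
  also have "\<dots> = ssum s (\<lambda>n. eterm s x n * d) + ssum s B"
    by (rule ssum_add[OF c ok1 Bok])
  also have "ssum s (\<lambda>n. eterm s x n * d) = sexp s x * d"
    unfolding sexp_ssum by (rule ssum_mult_right[OF c eterm_ok])
  also have "ssum s B = ssum s (\<lambda>m. (1/2) *\<^sub>R (s * (eterm s x m * e)))"
    by (simp add: ssum_shift[OF c Bok] B0 BS)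
  also have "\<dots> = (1/2) *\<^sub>R ssum s (\<lambda>m. s * (eterm s x m * e))"
    by (rule ssum_scaleR[OF c sdiv_mult_left[OF cen ok2]])
  also have "ssum s (\<lambda>m. s * (eterm s x m * e)) = s * ssum s (\<lambda>m. eterm s x m * e)"
    by (rule ssum_mult_left[OF c ok2])
  also have "ssum s (\<lambda>m. eterm s x m * e) = sexp s x * e"
    unfolding sexp_ssum by (rule ssum_mult_right[OF c eterm_ok])
  finally show ?thesis .
qed

lemma ring_inv_eq: "x * y = 1 \<Longrightarrow> y * x = 1 \<Longrightarrow> ring_inv x = (y::'a::ring_1)"
  unfolding ring_inv_def
proof (rule the_equality)
  fix z assume xy: "x * y = 1" and yx: "y * x = 1"
  assume "x * z = 1 \<and> z * x = 1"
  then have "z = (y * x) * z" using yx by simp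
  also have "\<dots> = y * (x * z)" by (simp only: mult.assoc)
  also have "\<dots> = y" using \<open>x * z = 1 \<and> z * x = 1\<close> by simp
  finally show "z = y" .
qed simp

lemma hom_pow:
  assumes "\<And>x y. h (x * y) = h x * h y" "h 1 = 1"
  shows "h (x ^ n) = h x ^ n"
  by (induction n) (simp_all add: assms)

lemma hom_sexpm1:
  fixes h :: "'a::real_algebra_1 \<Rightarrow> 'b::real_algebra_1"
  assumes c: "sadic_complete s" and c': "sadic_complete s'"
    and hadd: "\<And>x y. h (x + y) = h x + h y" and hmul: "\<And>x y. h (x * y) = h x * h y"
    and h1: "h 1 = 1" and hsc: "\<And>r x. h (r *\<^sub>R x) = r *\<^sub>R h x" and hs: "h s = s'"
  shows "h (sexpm1_div s x) = sexpm1_div s' (h x)"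
proof -
  have "h (sexpm1_div s x) = ssum s' (\<lambda>n. h (pterm s x n))"
    unfolding sexpm1_ssum by (rule ssum_hom[OF c c' pterm_ok hadd hmul h1 hs])
  also have "(\<lambda>n. h (pterm s x n)) = pterm s' (h x)"
    by (rule ext) (simp add: pterm_def hsc hmul hom_pow[OF hmul h1] hs del: power_Suc)
  finally show ?thesis by (simp add: sexpm1_ssum)
qed

lemma alg_C2:
  fixes a b w :: "'b::ring_1"
  assumes ab: "a * b = b * a" and wb: "w * b = b * w" and aw: "a * w = w * a + w * w - w"
  shows "(a + b * w) * (a + b * w) = a * a + (b * b) * w + 2 * (b * (w * a)) - (b * b + b) * (w - w * w)"
proof -
  have ab': "a * (b * z) = b * (a * z)" for z
    by (simp only: mult.assoc[symmetric] ab)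
  have wb': "w * (b * z) = b * (w * z)" for z
    by (simp only: mult.assoc[symmetric] wb)
  have aw': "a * (w * z) = w * (a * z) + w * (w * z) - w * z" for z
  proof -
    have "a * (w * z) = (a * w) * z" by (simp only: mult.assoc)
    also have "\<dots> = (w * a + w * w - w) * z" by (simp only: aw)
    finally show ?thesis by (simp add: algebra_simps)
  qed
  show ?thesis
    by (simp add: algebra_simps ab wb aw ab' wb' aw' mult_2 mult_2_right)
qed

lemma comm_add_r: "comm c (a + b) = comm c a + comm c (b::'a::ring)"
  unfolding comm_def by (simp add: algebra_simps)
lemma comm_add_l: "comm (a + b) c = comm a c + comm b (c::'a::ring)"
  unfolding comm_def by (simp add: algebra_simps)
lemma comm_diff_r: "comm c (a - b) = comm c a - comm c (b::'a::ring)"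
  unfolding comm_def by (simp add: algebra_simps)
lemma comm_neg_r: "comm c (- a) = - comm c (a::'a::ring)"
  unfolding comm_def by (simp add: algebra_simps)
lemma comm_neg_l: "comm (- a) c = - comm a (c::'a::ring)"
  unfolding comm_def by (simp add: algebra_simps)
lemma comm_scaleR_r: "comm c (r *\<^sub>R a) = r *\<^sub>R comm c (a::'a::real_algebra_1)"
  unfolding comm_def by (simp add: algebra_simps)
lemma comm_scaleR_l: "comm (r *\<^sub>R a) c = r *\<^sub>R comm a (c::'a::real_algebra_1)"
  unfolding comm_def by (simp add: algebra_simps)
lemma comm_antisym: "comm a b = - comm b (a::'a::ring)"
  unfolding comm_def by (simp add: algebra_simps)
lemma comm_one_r: "comm c (1::'a::ring_1) = 0"
  unfolding comm_def by simp
lemma comm_self: "comm a (a::'a::ring) = 0"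
  unfolding comm_def by simp
lemma comm_mult_l: "comm (a * b) c = a * comm b c + comm a c * (b::'a::ring)"
  unfolding comm_def by (simp add: algebra_simps)
lemma comm_s_r: assumes "\<forall>z. s * z = z * s" shows "comm c (s * a) = s * comm c (a::'a::ring)"
proof -
  have h: "c * s = s * c" using assms by simp
  show ?thesis by (simp add: comm_def right_diff_distrib mult.assoc[symmetric] h)
qed
lemma comm_s_l: assumes "\<forall>z. s * z = z * s" shows "comm (s * a) c = s * comm a (c::'a::ring)"
proof -
  have h: "c * s = s * c" using assms by simp
  show ?thesis by (simp add: comm_def right_diff_distrib mult.assoc[symmetric] h)
qed
lemma comm_eq0: "comm a b = 0 \<longleftrightarrow> a * b = b * (a::'a::ring)"
  unfolding comm_def by simp

theorem mainTheorem6: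
  fixes \<mu> \<nu> :: real
    and s H P K D C1 C2 :: "'a::real_algebra_1"
    and sB :: "'b::real_algebra_1"
    and i1 i2 :: "'a \<Rightarrow> 'b"
    and \<Delta> :: "'a \<Rightarrow> 'b"
  defines "Em \<equiv> sexp s (- P)"
    and "calP \<equiv> sexpm1_div s P"
    and "calC2 \<equiv> C2 + s * (\<mu> *\<^sub>R D ^ 2)"
    and "W \<equiv> ring_inv (1 + s * sexpm1_div s P)"
  assumes complA: "sadic_complete s"
    and rKH: "comm K H = \<nu> *\<^sub>R sexpm1_div s P"
    and rKP: "comm K P = \<mu> *\<^sub>R (Em * H)"
    and rHP: "comm H P = 0"
    and rKD: "comm K D = 0"
    and rDH: "comm D H = H"
    and rDC1: "comm D C1 = - C1"
    and rHC1: "comm H C1 = - ((2 * \<nu>) *\<^sub>R D)"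
    and rDP: "comm D P = - sexpm1_div s (- P)"
    and rDC2: "comm D C2 = - C2 - s * (\<mu> *\<^sub>R D ^ 2)"
    and rPC2: "comm P C2 = (2 * \<mu>) *\<^sub>R D"
    and rKC1: "comm K C1 = \<nu> *\<^sub>R C2 + s * ((\<mu> * \<nu>) *\<^sub>R D ^ 2)"
    and rKC2: "comm K C2 = \<mu> *\<^sub>R C1"
    and rPC1: "comm P C1 = - (Em * K) - K * Em"
    and rHC2: "comm H C2 = 2 * K + s * (\<mu> *\<^sub>R (D * H + H * D))"
    and rC1C2: "comm C1 C2 = - (s * (\<mu> *\<^sub>R (D * C1 + C1 * D)))"
    and complB: "sadic_complete sB"
    and i1_hom: "\<And>x y. i1 (x + y) = i1 x + i1 y" "\<And>x y. i1 (x * y) = i1 x * i1 y"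
                "i1 1 = 1" "\<And>r x. i1 (r *\<^sub>R x) = r *\<^sub>R i1 x"
    and i2_hom: "\<And>x y. i2 (x + y) = i2 x + i2 y" "\<And>x y. i2 (x * y) = i2 x * i2 y"
                "i2 1 = 1" "\<And>r x. i2 (r *\<^sub>R x) = r *\<^sub>R i2 x"
    and i12_comm: "\<And>x y. i1 x * i2 y = i2 y * i1 x"
    and i1_s: "i1 s = sB" and i2_s: "i2 s = sB"
    and \<Delta>_hom: "\<And>x y. \<Delta> (x + y) = \<Delta> x + \<Delta> y" "\<And>x y. \<Delta> (x * y) = \<Delta> x * \<Delta> y"
                "\<Delta> 1 = 1" "\<And>r x. \<Delta> (r *\<^sub>R x) = r *\<^sub>R \<Delta> x"
    and \<Delta>_s: "\<Delta> s = sB"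
    and \<Delta>P: "\<Delta> P = i2 P + i1 P"
    and \<Delta>D: "\<Delta> D = i2 D + i1 D * i2 Em"
    and \<Delta>H: "\<Delta> H = i2 H + i1 H * i2 (sexp s P)"
    and \<Delta>C2: "\<Delta> C2 = i2 C2 + i1 C2 * i2 Em"
    and \<Delta>K: "\<Delta> K = i2 K + i1 K - sB * (\<mu> *\<^sub>R (i1 D * i2 (Em * H)))"
    and \<Delta>C1: "\<Delta> C1 = i2 C1 + i1 C1 * i2 Em - 2 * sB * (i1 D * i2 (Em * K))
                  + sB ^ 2 * (\<mu> *\<^sub>R (i1 (D ^ 2 + D) * i2 (Em ^ 2 * H)))"
  shows "comm K H = \<nu> *\<^sub>R calP
       \<and> comm K calP = \<mu> *\<^sub>R H
       \<and> comm H calP = 0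
       \<and> comm D H = H
       \<and> comm D C1 = - C1
       \<and> comm H C1 = - ((2 * \<nu>) *\<^sub>R D)
       \<and> comm D calP = calP
       \<and> comm D calC2 = - calC2
       \<and> comm calP calC2 = (2 * \<mu>) *\<^sub>R D
       \<and> comm K C1 = \<nu> *\<^sub>R calC2
       \<and> comm K calC2 = \<mu> *\<^sub>R C1
       \<and> comm K D = 0
       \<and> comm H calC2 = 2 * K
       \<and> comm calP C1 = - (2 * K)
       \<and> comm C1 calC2 = 0
       \<and> \<Delta> calP = i2 calP + i1 calP + sB * (i1 calP * i2 calP)
       \<and> \<Delta> H = i2 H + i1 H + sB * (i1 H * i2 calP)
       \<and> \<Delta> D = i2 D + i1 D * i2 W
       \<and> \<Delta> K = i2 K + i1 K - sB * (\<mu> *\<^sub>R (i1 D * i2 (W * H)))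
       \<and> \<Delta> C1 = i2 C1 + i1 C1 * i2 W - 2 * sB * (i1 D * i2 (W * K))
                  + sB ^ 2 * (\<mu> *\<^sub>R (i1 (D ^ 2 + D) * i2 (W ^ 2 * H)))
       \<and> \<Delta> calC2 = i2 calC2 + i1 calC2 * i2 W + 2 * sB * (\<mu> *\<^sub>R (i1 D * i2 (W * D)))
                  - sB * (\<mu> *\<^sub>R (i1 (D ^ 2 + D) * i2 (W ^ 2 * (s * calP))))"
proof -
  have cen: "\<forall>z. s * z = z * s" by (rule compl_central[OF complA])
  have cenB: "\<forall>z. sB * z = z * sB" by (rule compl_central[OF complB])
  define E where "E = sexp s P"
  define Qm where "Qm = sexpm1_div s (- P)"
  have E1: "E = 1 + s * calP" unfolding E_def calP_def by (rule sexp_eq[OF complA])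
  have EEm: "E * Em = 1" "Em * E = 1" unfolding E_def Em_def by (rule sexp_inv[OF complA])+
  have WEm: "W = Em" unfolding W_def
    by (rule ring_inv_eq) (simp_all add: EEm E1[unfolded calP_def, symmetric])
  have PEm: "P * Em = Em * P" unfolding Em_def by (rule sexp_commute[OF complA]) simp
  have HP: "H * P = P * H" using rHP by (simp add: comm_eq0)
  have HEm: "H * Em = Em * H" unfolding Em_def by (rule sexp_commute[OF complA]) (simp add: HP)
  have EQm: "E * Qm = - calP" unfolding E_def Qm_def calP_def by (rule sexpm1_neg[OF complA])
  have PQm: "P * Qm = Qm * P" unfolding Qm_def by (rule sexpm1_commute[OF complA]) simp
  have Em1: "Em = 1 + s * Qm" unfolding Em_def Qm_def by (rule sexp_eq[OF complA])
  have DD: "D ^ 2 = D * D" by (simp add: power2_eq_square)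

  have r1: "comm K H = \<nu> *\<^sub>R calP" using rKH calP_def by simp
  have r2: "comm K calP = \<mu> *\<^sub>R H"
  proof -
    have "Em * H * P = Em * (P * H)" by (simp only: mult.assoc HP)
    also have "\<dots> = (P * Em) * H" by (simp only: mult.assoc[symmetric] PEm)
    finally have "comm (\<mu> *\<^sub>R (Em * H)) P = 0" by (simp add: comm_eq0 mult.assoc)
    then have "comm K calP = E * (\<mu> *\<^sub>R (Em * H)) + (1/2) *\<^sub>R (s * (E * 0))"
      unfolding calP_def E_def by (rule sexpm1_deriv[OF complA rKP]) simp
    also have "\<dots> = \<mu> *\<^sub>R ((E * Em) * H)" by (simp add: mult.assoc)
    finally show ?thesis by (simp add: EEm)
  qed
  have r3: "comm H calP = 0" unfolding calP_def comm_eq0 by (rule sexpm1_commute[OF complA HP])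
  have r7: "comm D calP = calP"
  proof -
    have "comm (- Qm) P = 0" using PQm by (simp add: comm_eq0)
    then have "comm D calP = E * (- Qm) + (1/2) *\<^sub>R (s * (E * 0))"
      unfolding calP_def E_def by (rule sexpm1_deriv[OF complA rDP[folded Qm_def]]) simp
    then show ?thesis by (simp add: EQm)
  qed
  have DcalP: "D * calP = calP * D + calP" using r7 unfolding comm_def by (simp add: algebra_simps)
  have cC: "comm c calC2 = comm c C2 + s * (\<mu> *\<^sub>R comm c (D * D))" for c
    unfolding calC2_def DD by (simp add: comm_add_r comm_s_r[OF cen] comm_scaleR_r)
  have r8: "comm D calC2 = - calC2"
  proof -
    have "comm D (D * D) = 0" by (simp add: comm_mult comm_self)
    then show ?thesis unfolding cC rDC2 by (simp add: calC2_def DD)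
  qed
  have two_mu: "(2 * \<mu>) *\<^sub>R X = \<mu> *\<^sub>R X + \<mu> *\<^sub>R X" for X :: 'a
    by (simp add: scaleR_left_distrib[symmetric])
  have two_mu': "(\<mu> * 2) *\<^sub>R X = \<mu> *\<^sub>R X + \<mu> *\<^sub>R X" for X :: 'a
    by (simp add: scaleR_left_distrib[symmetric])
  have r9: "comm calP calC2 = (2 * \<mu>) *\<^sub>R D"
  proof -
    have cC2P: "comm C2 P = - ((2 * \<mu>) *\<^sub>R D)" using comm_antisym[of C2 P] rPC2 by simp
    have e9: "comm (- ((2 * \<mu>) *\<^sub>R D)) P = (2 * \<mu>) *\<^sub>R Qm"
      by (simp add: comm_neg_l comm_scaleR_l rDP[folded Qm_def])
    have xe9: "P * ((2 * \<mu>) *\<^sub>R Qm) = ((2 * \<mu>) *\<^sub>R Qm) * P" by (simp add: PQm)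
    have "comm C2 calP = E * (- ((2 * \<mu>) *\<^sub>R D)) + (1/2) *\<^sub>R (s * (E * ((2 * \<mu>) *\<^sub>R Qm)))"
      unfolding calP_def E_def by (rule sexpm1_deriv[OF complA cC2P e9 xe9])
    also have "\<dots> = - ((2 * \<mu>) *\<^sub>R (E * D)) - \<mu> *\<^sub>R (s * calP)"
      by (simp add: mult_scaleR_right EQm)
    finally have c9: "comm C2 calP = - ((2 * \<mu>) *\<^sub>R (E * D)) - \<mu> *\<^sub>R (s * calP)" .
    have cPC2: "comm calP C2 = (2 * \<mu>) *\<^sub>R (E * D) + \<mu> *\<^sub>R (s * calP)"
      using comm_antisym[of calP C2] c9 by simp
    have cPD: "comm calP D = - calP" using comm_antisym[of calP D] r7 by simp
    have cPDD: "comm calP (D * D) = - (calP * D) - (calP * D + calP)"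
      by (simp add: comm_mult cPD DcalP)
    show ?thesis unfolding cC cPC2 cPDD E1
      by (simp add: algebra_simps scaleR_right_distrib scaleR_right_diff_distrib mult_scaleR_right
          mult_scaleR_left two_mu two_mu')
  qed
  have r10: "comm K C1 = \<nu> *\<^sub>R calC2"
    unfolding rKC1 calC2_def by (simp add: scaleR_right_distrib mult_scaleR_right mult.commute)
  have r11: "comm K calC2 = \<mu> *\<^sub>R C1"
    unfolding cC rKC2 by (simp add: comm_mult rKD)
  have r13: "comm H calC2 = 2 * K"
  proof -
    have "comm H D = - H" using rDH comm_antisym by (metis minus_minus)
    then show ?thesis unfolding cC rHC2 by (simp add: comm_mult algebra_simps)
  qed
  have r14: "comm calP C1 = - (2 * K)"
  proof -
    have cC1P: "comm C1 P = Em * K + K * Em" using comm_antisym[of C1 P] rPC1 by simp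
    have cEmP: "comm Em P = 0" using PEm by (simp add: comm_eq0)
    have e14: "comm (Em * K + K * Em) P = (2 * \<mu>) *\<^sub>R (Em * (Em * H))"
      by (simp add: comm_add_l comm_mult_l rKP cEmP mult_scaleR_left mult_scaleR_right mult.assoc HEm two_mu)
    have PEm': "P * (Em * z) = Em * (P * z)" for z by (simp only: mult.assoc[symmetric] PEm)
    have "P * (Em * (Em * H)) = Em * (Em * (H * P))" by (simp only: PEm' HP)
    then have xe14: "P * ((2 * \<mu>) *\<^sub>R (Em * (Em * H))) = ((2 * \<mu>) *\<^sub>R (Em * (Em * H))) * P"
      by (simp add: mult_scaleR_left mult_scaleR_right mult.assoc)
    have c14: "comm C1 calP = E * (Em * K + K * Em) + (1/2) *\<^sub>R (s * (E * ((2 * \<mu>) *\<^sub>R (Em * (Em * H)))))"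
      unfolding calP_def E_def by (rule sexpm1_deriv[OF complA cC1P e14 xe14])
    have cKE: "comm K E = s * (\<mu> *\<^sub>R H)"
      by (simp add: E1 comm_add_r comm_one_r comm_s_r[OF cen] r2)
    have EK: "E * K = K * E - s * (\<mu> *\<^sub>R H)" using cKE unfolding comm_def by (simp add: algebra_simps)
    have a1: "E * (Em * K) = K" by (simp add: mult.assoc[symmetric] EEm)
    have "E * (K * Em) = (K * E - s * (\<mu> *\<^sub>R H)) * Em" by (simp add: mult.assoc[symmetric] EK)
    also have "\<dots> = K - s * (\<mu> *\<^sub>R (Em * H))"
      by (simp add: left_diff_distrib mult.assoc EEm mult_scaleR_left HEm)
    finally have a2: "E * (K * Em) = K - s * (\<mu> *\<^sub>R (Em * H))" .
    have a3: "(1/2) *\<^sub>R (s * (E * ((2 * \<mu>) *\<^sub>R (Em * (Em * H))))) = \<mu> *\<^sub>R (s * (Em * H))"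
      by (simp add: mult_scaleR_right mult.assoc[symmetric] EEm)
    have "comm C1 calP = K + K"
      unfolding c14 distrib_left a1 a2 a3 by (simp add: mult_scaleR_right)
    then show ?thesis using comm_antisym[of calP C1] by (simp add: mult_2)
  qed
  have r15: "comm C1 calC2 = 0"
  proof -
    have "comm C1 D = C1" using rDC1 comm_antisym by (metis minus_minus)
    then show ?thesis unfolding cC rC1C2 by (simp add: comm_mult algebra_simps)
  qed
  have r16: "\<Delta> calP = i2 calP + i1 calP + sB * (i1 calP * i2 calP)"
  proof -
    have hP: "\<Delta> calP = sexpm1_div sB (\<Delta> P)" unfolding calP_def
      by (rule hom_sexpm1[OF complA complB \<Delta>_hom \<Delta>_s])
    have h1: "i1 calP = sexpm1_div sB (i1 P)" unfolding calP_def
      by (rule hom_sexpm1[OF complA complB i1_hom i1_s])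
    have h2: "i2 calP = sexpm1_div sB (i2 P)" unfolding calP_def
      by (rule hom_sexpm1[OF complA complB i2_hom i2_s])
    have dp: "\<Delta> P = i1 P + i2 P" by (simp add: \<Delta>P add.commute)
    have sm: "sexpm1_div sB (i1 P + i2 P) = sexpm1_div sB (i1 P) + sexp sB (i1 P) * sexpm1_div sB (i2 P)"
      by (rule sexpm1_add[OF complB i12_comm])
    have se: "sexp sB (i1 P) = 1 + sB * sexpm1_div sB (i1 P)" by (rule sexp_eq[OF complB])
    show ?thesis unfolding hP dp sm se h1[symmetric] h2[symmetric]
      by (simp add: distrib_right mult.assoc algebra_simps)
  qed
  have r17: "\<Delta> H = i2 H + i1 H + sB * (i1 H * i2 calP)"
  proof -
    have "i2 (sexp s P) = 1 + sB * i2 calP" using E1[unfolded E_def] by (simp add: i2_hom i2_s)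
    moreover have "i1 H * sB = sB * i1 H" using cenB by simp
    then have "i1 H * (sB * i2 calP) = sB * (i1 H * i2 calP)" by (simp only: mult.assoc[symmetric])
    ultimately show ?thesis using \<Delta>H by (simp add: distrib_left)
  qed
  have r18: "\<Delta> D = i2 D + i1 D * i2 W" using \<Delta>D WEm by simp
  have r19: "\<Delta> K = i2 K + i1 K - sB * (\<mu> *\<^sub>R (i1 D * i2 (W * H)))" using \<Delta>K WEm by simp
  have r20: "\<Delta> C1 = i2 C1 + i1 C1 * i2 W - 2 * sB * (i1 D * i2 (W * K))
                  + sB ^ 2 * (\<mu> *\<^sub>R (i1 (D ^ 2 + D) * i2 (W ^ 2 * H)))" using \<Delta>C1 WEm by simp
  have r21: "\<Delta> calC2 = i2 calC2 + i1 calC2 * i2 W + 2 * sB * (\<mu> *\<^sub>R (i1 D * i2 (W * D)))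
                  - sB * (\<mu> *\<^sub>R (i1 (D ^ 2 + D) * i2 (W ^ 2 * (s * calP))))"
  proof -
    have dQ: "comm D (- P) = Qm" by (simp add: comm_neg_r rDP Qm_def)
    have eQ: "comm Qm (- P) = 0" by (simp add: comm_eq0 PQm)
    have "comm D Qm = Em * Qm + (1/2) *\<^sub>R (s * (Em * 0))" unfolding Qm_def Em_def
      by (rule sexpm1_deriv[OF complA dQ[unfolded Qm_def] eQ[unfolded Qm_def]]) simp
    then have cDQ: "comm D Qm = Em * Qm" by simp
    have sQ: "s * Qm = Em - 1" using Em1 by simp
    have "s * Em = Em * s" using cen by simp
    then have "s * (Em * Qm) = Em * (s * Qm)" by (simp only: mult.assoc[symmetric])
    note sEQ = this
    have c1: "comm D (1 + s * Qm) = s * comm D Qm" by (simp add: comm_add_r comm_one_r comm_s_r[OF cen])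
    have "comm D Em = s * comm D Qm" using c1 Em1 by simp
    also have "\<dots> = Em * (s * Qm)" by (simp only: cDQ sEQ)
    also have "\<dots> = Em * Em - Em" by (simp only: sQ right_diff_distrib mult_1_right)
    finally have cDEm: "comm D Em = Em * Em - Em" .
    have DEm: "D * Em = Em * D + Em * Em - Em" using cDEm unfolding comm_def by (simp add: algebra_simps)
    have sP: "s * calP = E - 1" using E1 by simp
    have WW: "Em ^ 2 * (s * calP) = Em - Em * Em"
      by (simp add: sP power2_eq_square right_diff_distrib mult.assoc EEm)
    have i1d: "i1 (x - y) = i1 x - i1 y" for x y using i1_hom(1)[of "x - y" y] by simp
    have i2d: "i2 (x - y) = i2 x - i2 y" for x y using i2_hom(1)[of "x - y" y] by simp
    define a where "a = i2 D"
    define b where "b = i1 D"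
    define w where "w = i2 Em"
    have ab: "a * b = b * a" unfolding a_def b_def by (rule i12_comm[symmetric])
    have wb: "w * b = b * w" unfolding w_def b_def by (rule i12_comm[symmetric])
    have "i2 D * i2 Em = i2 (D * Em)" by (simp only: i2_hom(2))
    also have "\<dots> = i2 (Em * D + Em * Em - Em)" by (simp only: DEm)
    also have "\<dots> = i2 Em * i2 D + i2 Em * i2 Em - i2 Em" by (simp only: i2d i2_hom(1) i2_hom(2))
    finally have aw: "a * w = w * a + w * w - w" unfolding a_def w_def .
    have L: "\<Delta> calC2 = i2 C2 + i1 C2 * w + sB * (\<mu> *\<^sub>R ((a + b * w) * (a + b * w)))"
      unfolding calC2_def DD a_def b_def w_def by (simp add: \<Delta>_hom \<Delta>_s \<Delta>C2 \<Delta>D)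
    have R: "i2 calC2 + i1 calC2 * i2 W + 2 * sB * (\<mu> *\<^sub>R (i1 D * i2 (W * D)))
                  - sB * (\<mu> *\<^sub>R (i1 (D ^ 2 + D) * i2 (W ^ 2 * (s * calP))))
        = i2 C2 + sB * (\<mu> *\<^sub>R (a * a)) + (i1 C2 + sB * (\<mu> *\<^sub>R (b * b))) * w
          + 2 * sB * (\<mu> *\<^sub>R (b * (w * a))) - sB * (\<mu> *\<^sub>R ((b * b + b) * (w - w * w)))"
      unfolding WEm WW calC2_def DD a_def b_def w_def
      by (simp add: i1_hom i2_hom i1_s i2_s i2d)
    show ?thesis unfolding L R alg_C2[OF ab wb aw]
      by (simp add: algebra_simps scaleR_right_distrib scaleR_right_diff_distrib mult_scaleR_right
          mult_scaleR_left mult_2)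
  qed
  show ?thesis
    by (intro conjI r1 r2 r3 rDH rDC1 rHC1 r7 r8 r9 r10 r11 rKD r13 r14 r15 r16 r17 r18 r19 r20 r21)
qed

end
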